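(* Consider testing $H_0^G:G\sim\mathcal G_d(N,1/2)$ versus $H_1^G:G\sim\mathcal G_d(N,1/2,\kappa)$ with $\kappa=N^\beta$, $0<\beta<1/2$, $d$ fixed. Let $C>0$ be a constant and let $f$ be a polynomial in the hyperedge indicator variables $(\mathcal A_e)_{e\in\binom{[N]}{d}}$ of $G$, of degree at most $D$ with $D\le C\log N$, such that $\mathbb E_{H_0^G}f(G)=0$ and $\mathbb E_{H_0^G}f(G)^2=1$. Then $\mathbb E_{H_1^G}f(G)=O(1)$, i.e. it is bounded by a constant not depending on $N$ or $f$.
   Context: $\mathcal G_d(N,1/2)$ is the random $d$-uniform hypergraph on $[N]$ where each $d$-element subset $e$ is a hyperedge independently with probability $1/2$; $\mathcal A_e\in\{0,1\}$ indicates whether $e$ is a hyperedge. $\mathcal G_d(N,1/2,\kappa)$ is obtained from $\mathcal G_d(N,1/2)$ by choosing a uniformly random $\kappa$-subset $K\subseteq[N]$ and adding all $d$-subsets of $K$ as hyperedges. *)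

theory Defs
  imports "HOL-Probability.Probability"
begin

definition hyperedges :: "nat \<Rightarrow> nat \<Rightarrow> nat set set" where
  "hyperedges N d = {e. e \<subseteq> {1..N} \<and> card e = d}"

definition hind :: "nat set set \<Rightarrow> nat set \<Rightarrow> real" where
  "hind G e = (if e \<in> G then 1 else 0)"

definition is_poly_deg_le :: "nat \<Rightarrow> nat \<Rightarrow> nat \<Rightarrow> (nat set set \<Rightarrow> real) \<Rightarrow> bool" where
  "is_poly_deg_le N d D f \<longleftrightarrow>
     (\<exists>(M :: (nat set \<Rightarrow> nat) set) (c :: (nat set \<Rightarrow> nat) \<Rightarrow> real).
        finite M \<and>
        (\<forall>m\<in>M. (\<forall>e. e \<notin> hyperedges N d \<longrightarrow> m e = 0) \<and> (\<Sum>e\<in>hyperedges N d. m e) \<le> D) \<and>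
        (\<forall>G. G \<subseteq> hyperedges N d \<longrightarrow>
              f G = (\<Sum>m\<in>M. c m * (\<Prod>e\<in>hyperedges N d. hind G e ^ m e))))"

text \<open>G_d(N,1/2): each d-subset is a hyperedge independently with prob. 1/2,
  i.e. the uniform distribution on sets of d-subsets of [N].\<close>
definition null_hg :: "nat \<Rightarrow> nat \<Rightarrow> nat set set pmf" where
  "null_hg N d = pmf_of_set (Pow (hyperedges N d))"

definition planted_hg :: "nat \<Rightarrow> nat \<Rightarrow> nat \<Rightarrow> nat set set pmf" where
  "planted_hg N d \<kappa> =
     bind_pmf (pmf_of_set {K. K \<subseteq> {1..N} \<and> card K = \<kappa>}) (\<lambda>K.
     map_pmf (\<lambda>G. G \<union> {e \<in> hyperedges N d. e \<subseteq> K}) (null_hg N d))"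

end

theory Submission
  imports Defs "HOL-Analysis.Analysis" "HOL-Real_Asymp.Real_Asymp"
begin


definition sg :: "nat set set \<Rightarrow> nat set \<Rightarrow> real" where
  "sg G e = (if e \<in> G then 1 else -1)"

definition chi :: "nat set set \<Rightarrow> nat set set \<Rightarrow> real" where
  "chi S G = (\<Prod>e\<in>S. sg G e)"

lemma sum_chi:
  assumes fin: "finite E" and U: "U \<subseteq> E"
  shows "(\<Sum>G\<in>Pow E. chi U G) = (if U = {} then real (card (Pow E)) else 0)"
proof (cases "U = {}")
  case True
  then show ?thesis by (simp add: chi_def)
next
  case False
  then obtain e where eU: "e \<in> U" by blast
  have finU: "finite U" using fin U finite_subset by blast
  define h where "h G = (if e \<in> G then G - {e} else insert e G)" for G :: "nat set set"
  have eE: "e \<in> E" using eU U by blast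
  have bij: "bij_betw h (Pow E) (Pow E)"
    by (rule bij_betw_byWitness[where f'=h]) (auto simp: h_def eE)
  have flip: "chi U (h G) = - chi U G" for G
  proof -
    have "chi U (h G) = sg (h G) e * (\<Prod>x\<in>U - {e}. sg (h G) x)"
      unfolding chi_def using prod.remove[OF finU eU] by simp
    also have "(\<Prod>x\<in>U - {e}. sg (h G) x) = (\<Prod>x\<in>U - {e}. sg G x)"
      by (rule prod.cong) (auto simp: sg_def h_def)
    also have "sg (h G) e = - sg G e" by (auto simp: sg_def h_def)
    finally show ?thesis
      unfolding chi_def using prod.remove[OF finU eU, of "sg G"] by simp
  qed
  have "(\<Sum>G\<in>Pow E. chi U G) = (\<Sum>G\<in>Pow E. chi U (h G))"
    using sum.reindex_bij_betw[OF bij, of "chi U"] by simp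
  also have "\<dots> = - (\<Sum>G\<in>Pow E. chi U G)" by (simp add: flip sum_negf)
  finally show ?thesis using False by simp
qed

lemma sg_sq: "sg G e * sg G e = 1" by (simp add: sg_def)

lemma chi_mult:
  assumes "finite S" "finite T"
  shows "chi S G * chi T G = chi ((S - T) \<union> (T - S)) G"
proof -
  have sq: "chi (S \<inter> T) G * chi (S \<inter> T) G = 1"
    unfolding chi_def prod.distrib[symmetric] by (simp add: sg_sq)
  have "chi S G = chi (S \<inter> T) G * chi (S - T) G"
    unfolding chi_def using prod.Int_Diff[OF assms(1)] by blast
  moreover have "chi T G = chi (S \<inter> T) G * chi (T - S) G"
    unfolding chi_def using prod.Int_Diff[OF assms(2), of _ S] by (simp add: Int_commute)
  moreover have "chi ((S - T) \<union> (T - S)) G = chi (S - T) G * chi (T - S) G"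
    unfolding chi_def by (rule prod.union_disjoint) (use assms in auto)
  ultimately show ?thesis using sq
    by (metis (no_types, lifting) mult.assoc mult.commute mult.left_neutral)
qed

lemma sum_chi_mult:
  assumes fin: "finite E" and "S \<subseteq> E" "T \<subseteq> E"
  shows "(\<Sum>G\<in>Pow E. chi S G * chi T G) = (if S = T then real (card (Pow E)) else 0)"
proof -
  have fs: "finite S" "finite T" using assms finite_subset by blast+
  have "(\<Sum>G\<in>Pow E. chi S G * chi T G) = (\<Sum>G\<in>Pow E. chi ((S - T) \<union> (T - S)) G)"
    by (simp add: chi_mult[OF fs])
  also have "\<dots> = (if (S - T) \<union> (T - S) = {} then real (card (Pow E)) else 0)"
    by (rule sum_chi[OF fin]) (use assms in auto)
  finally show ?thesis by auto
qed



lemma finite_hyperedges: "finite (hyperedges N d)"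
proof -
  have "hyperedges N d \<subseteq> Pow {1..N}" by (auto simp: hyperedges_def)
  then show ?thesis using finite_subset by blast
qed

lemma hind_sg: "hind G e = (1 + sg G e) / 2"
  by (simp add: hind_def sg_def)

lemma mono_reduce:
  assumes fin: "finite E"
  shows "(\<Prod>e\<in>E. hind G e ^ m e) = (\<Prod>e\<in>{e\<in>E. m e \<noteq> 0}. hind G e)"
proof -
  have "(\<Prod>e\<in>E. hind G e ^ m e) = (\<Prod>e\<in>{e\<in>E. m e \<noteq> 0}. hind G e ^ m e)"
    by (rule prod.mono_neutral_right) (use fin in auto)
  also have "\<dots> = (\<Prod>e\<in>{e\<in>E. m e \<noteq> 0}. hind G e)"
    by (rule prod.cong) (auto simp: hind_def)
  finally show ?thesis .
qed

lemma prod_hind: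
  assumes fin: "finite T"
  shows "(\<Prod>e\<in>T. hind G e) = (1/2)^card T * (\<Sum>X\<in>Pow T. chi X G)"
proof -
  have "(\<Prod>e\<in>T. hind G e) = (\<Prod>e\<in>T. sg G e / 2 + 1/2)"
    by (rule prod.cong) (auto simp: hind_sg)
  also have "\<dots> = (\<Sum>X\<in>Pow T. (\<Prod>x\<in>X. sg G x / 2) * (\<Prod>x\<in>T - X. 1/2))"
    by (rule prod_add[OF fin])
  also have "\<dots> = (\<Sum>X\<in>Pow T. (1/2)^card T * chi X G)"
  proof (rule sum.cong[OF refl])
    fix X assume X: "X \<in> Pow T"
    have fX: "finite X" using X fin finite_subset by blast
    have c: "card T = card X + card (T - X)"
    proof -
      have "card (T - X) = card T - card X" using X fX by (simp add: card_Diff_subset)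
      moreover have "card X \<le> card T" using X fin card_mono by blast
      ultimately show ?thesis by simp
    qed
    have "(\<Prod>x\<in>X. sg G x / 2) = chi X G * (1/2)^card X"
      unfolding chi_def by (simp add: prod_dividef fX power_one_over)
    moreover have "(\<Prod>x\<in>T - X. (1::real)/2) = (1/2)^card (T - X)" by simp
    ultimately show "(\<Prod>x\<in>X. sg G x / 2) * (\<Prod>x\<in>T - X. 1/2) = (1/2)^card T * chi X G"
      by (simp add: c power_add)
  qed
  also have "\<dots> = (1/2)^card T * (\<Sum>X\<in>Pow T. chi X G)"
    by (simp add: sum_distrib_left)
  finally show ?thesis .
qed

lemma poly_rep:
  assumes "is_poly_deg_le N d D f"
  shows "\<exists>a. \<forall>G. G \<subseteq> hyperedges N d \<longrightarrow>
           f G = (\<Sum>S\<in>{S. S \<subseteq> hyperedges N d \<and> card S \<le> D}. a S * chi S G)"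
proof -
  let ?E = "hyperedges N d"
  let ?F = "{S. S \<subseteq> ?E \<and> card S \<le> D}"
  have finE: "finite ?E" by (rule finite_hyperedges)
  have finF: "finite ?F" using finE by (auto intro: finite_subset[of _ "Pow ?E"])
  obtain M c where finM: "finite M"
    and Mdeg: "\<forall>m\<in>M. (\<forall>e. e \<notin> ?E \<longrightarrow> m e = 0) \<and> (\<Sum>e\<in>?E. m e) \<le> D"
    and fG: "\<forall>G. G \<subseteq> ?E \<longrightarrow> f G = (\<Sum>m\<in>M. c m * (\<Prod>e\<in>?E. hind G e ^ m e))"
    using assms unfolding is_poly_deg_le_def by blast
  define T where "T m = {e\<in>?E. m e \<noteq> 0}" for m :: "nat set \<Rightarrow> nat"
  define a where "a S = (\<Sum>m\<in>M. if S \<subseteq> T m then c m * (1/2)^card (T m) else 0)" for S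
  have finT: "finite (T m)" for m unfolding T_def using finE by simp
  have cardT: "card (T m) \<le> D" if "m \<in> M" for m
  proof -
    have "card (T m) = (\<Sum>e\<in>T m. 1)" by simp
    also have "\<dots> \<le> (\<Sum>e\<in>T m. m e)" by (rule sum_mono) (auto simp: T_def)
    also have "\<dots> \<le> (\<Sum>e\<in>?E. m e)" by (rule sum_mono2[OF finE]) (auto simp: T_def)
    finally show ?thesis using Mdeg that by auto
  qed
  have PowT: "{S \<in> ?F. S \<subseteq> T m} = Pow (T m)" if "m \<in> M" for m
  proof -
    have "S \<in> ?F" if "S \<subseteq> T m" for S
    proof -
      have "card S \<le> card (T m)" using that finT card_mono by blast
      then show ?thesis using cardT[OF \<open>m\<in>M\<close>] that by (auto simp: T_def)
    qed
    then show ?thesis by auto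
  qed
  show ?thesis
  proof (intro exI allI impI)
    fix G assume G: "G \<subseteq> ?E"
    have "(\<Sum>S\<in>?F. a S * chi S G) =
          (\<Sum>S\<in>?F. \<Sum>m\<in>M. if S \<subseteq> T m then c m * (1/2)^card (T m) * chi S G else 0)"
      unfolding a_def sum_distrib_right by (intro sum.cong refl) auto
    also have "\<dots> = (\<Sum>m\<in>M. \<Sum>S\<in>?F. if S \<subseteq> T m then c m * (1/2)^card (T m) * chi S G else 0)"
      by (rule sum.swap)
    also have "\<dots> = (\<Sum>m\<in>M. \<Sum>S\<in>Pow (T m). c m * (1/2)^card (T m) * chi S G)"
    proof (rule sum.cong[OF refl])
      fix m assume "m \<in> M"
      show "(\<Sum>S\<in>?F. if S \<subseteq> T m then c m * (1/2)^card (T m) * chi S G else 0) =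
            (\<Sum>S\<in>Pow (T m). c m * (1/2)^card (T m) * chi S G)"
        using sum.inter_filter[OF finF, of "\<lambda>S. c m * (1/2)^card (T m) * chi S G" "\<lambda>S. S \<subseteq> T m"]
        PowT[OF \<open>m \<in> M\<close>] by simp
    qed
    also have "\<dots> = (\<Sum>m\<in>M. c m * ((1/2)^card (T m) * (\<Sum>S\<in>Pow (T m). chi S G)))"
      by (simp add: sum_distrib_left mult.assoc)
    also have "\<dots> = (\<Sum>m\<in>M. c m * (\<Prod>e\<in>?E. hind G e ^ m e))"
    proof (intro sum.cong refl)
      fix m
      have "(\<Prod>e\<in>?E. hind G e ^ m e) = (\<Prod>e\<in>T m. hind G e)"
        unfolding T_def by (rule mono_reduce[OF finE])
      then show "c m * ((1/2)^card (T m) * (\<Sum>S\<in>Pow (T m). chi S G)) = c m * (\<Prod>e\<in>?E. hind G e ^ m e)"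
        by (simp add: prod_hind[OF finT])
    qed
    also have "\<dots> = f G" using fG G by simp
    finally show "f G = (\<Sum>S\<in>?F. a S * chi S G)" by simp
  qed
qed



lemma chi_union:
  assumes "finite S"
  shows "chi S (G \<union> P) = chi (S - P) G"
proof -
  have "chi S (G \<union> P) = (\<Prod>e\<in>S \<inter> P. sg (G \<union> P) e) * (\<Prod>e\<in>S - P. sg (G \<union> P) e)"
    unfolding chi_def by (rule prod.Int_Diff[OF assms])
  also have "(\<Prod>e\<in>S \<inter> P. sg (G \<union> P) e) = 1" by (rule prod.neutral) (auto simp: sg_def)
  also have "(\<Prod>e\<in>S - P. sg (G \<union> P) e) = chi (S - P) G"
    unfolding chi_def by (rule prod.cong) (auto simp: sg_def)
  finally show ?thesis by simp
qed

lemma sum_chi_union: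
  assumes finE: "finite E" and "S \<subseteq> E"
  shows "(\<Sum>G\<in>Pow E. chi S (G \<union> P)) = (if S \<subseteq> P then real (card (Pow E)) else 0)"
proof -
  have fS: "finite S" using assms finite_subset by blast
  have "(\<Sum>G\<in>Pow E. chi S (G \<union> P)) = (\<Sum>G\<in>Pow E. chi (S - P) G)"
    by (simp add: chi_union[OF fS])
  also have "\<dots> = (if S - P = {} then real (card (Pow E)) else 0)"
    by (rule sum_chi[OF finE]) (use assms in auto)
  finally show ?thesis by auto
qed

lemma null_exp:
  assumes finE: "finite E" and FE: "F \<subseteq> Pow E" and finF: "finite F" and e: "{} \<in> F"
    and rep: "\<forall>G. G \<subseteq> E \<longrightarrow> f G = (\<Sum>S\<in>F. a S * chi S G)"
  shows "measure_pmf.expectation (pmf_of_set (Pow E)) f = a {}"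
    and "measure_pmf.expectation (pmf_of_set (Pow E)) (\<lambda>G. (f G)^2) = (\<Sum>S\<in>F. (a S)^2)"
proof -
  let ?c = "real (card (Pow E))"
  have cpos: "?c > 0" using finE by (simp add: card_gt_0_iff Pow_not_empty)
  have ne: "Pow E \<noteq> {}" by blast
  have fP: "finite (Pow E)" using finE by simp
  have "measure_pmf.expectation (pmf_of_set (Pow E)) f = (\<Sum>G\<in>Pow E. f G) / ?c"
    by (rule integral_pmf_of_set[OF ne fP])
  also have "(\<Sum>G\<in>Pow E. f G) = (\<Sum>G\<in>Pow E. \<Sum>S\<in>F. a S * chi S G)"
    using rep by (intro sum.cong refl) auto
  also have "\<dots> = (\<Sum>S\<in>F. a S * (\<Sum>G\<in>Pow E. chi S G))"
    by (subst sum.swap) (simp add: sum_distrib_left)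
  also have "\<dots> = (\<Sum>S\<in>F. if S = {} then a S * ?c else 0)"
    using FE by (intro sum.cong refl) (auto simp: sum_chi[OF finE PowD[OF subsetD[OF FE]]])
  also have "\<dots> = a {} * ?c" using finF e by (simp add: sum.delta)
  finally show "measure_pmf.expectation (pmf_of_set (Pow E)) f = a {}" using cpos by simp
  have "measure_pmf.expectation (pmf_of_set (Pow E)) (\<lambda>G. (f G)^2) = (\<Sum>G\<in>Pow E. (f G)^2) / ?c"
    by (rule integral_pmf_of_set[OF ne fP])
  also have "(\<Sum>G\<in>Pow E. (f G)^2) = (\<Sum>G\<in>Pow E. \<Sum>S\<in>F. \<Sum>T\<in>F. a S * a T * (chi S G * chi T G))"
  proof (intro sum.cong refl)
    fix G assume "G \<in> Pow E"
    then have "f G = (\<Sum>S\<in>F. a S * chi S G)" using rep by auto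
    then show "(f G)^2 = (\<Sum>S\<in>F. \<Sum>T\<in>F. a S * a T * (chi S G * chi T G))"
      by (simp add: power2_eq_square sum_product mult_ac)
  qed
  also have "\<dots> = (\<Sum>S\<in>F. \<Sum>T\<in>F. a S * a T * (\<Sum>G\<in>Pow E. chi S G * chi T G))"
    by (simp add: sum.swap[of _ "Pow E"] sum_distrib_left)
  also have "\<dots> = (\<Sum>S\<in>F. \<Sum>T\<in>F. if S = T then a S * a T * ?c else 0)"
    using FE by (intro sum.cong refl) (auto simp: sum_chi_mult[OF finE PowD[OF subsetD[OF FE]] PowD[OF subsetD[OF FE]]])
  also have "\<dots> = (\<Sum>S\<in>F. (a S)^2 * ?c)"
    using finF by (intro sum.cong refl) (simp add: sum.delta power2_eq_square)
  finally show "measure_pmf.expectation (pmf_of_set (Pow E)) (\<lambda>G. (f G)^2) = (\<Sum>S\<in>F. (a S)^2)"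
    using cpos by (simp add: sum_distrib_right[symmetric])
qed

lemma planted_exp:
  assumes finE: "finite E" and FE: "F \<subseteq> Pow E" and finF: "finite F"
    and rep: "\<forall>G. G \<subseteq> E \<longrightarrow> f G = (\<Sum>S\<in>F. a S * chi S G)"
    and finK: "finite Ks" and neK: "Ks \<noteq> {}" and PE: "\<And>K. P K \<subseteq> E"
  shows "measure_pmf.expectation
           (bind_pmf (pmf_of_set Ks) (\<lambda>K. map_pmf (\<lambda>G. G \<union> P K) (pmf_of_set (Pow E)))) f
         = (\<Sum>S\<in>F. a S * (real (card {K\<in>Ks. S \<subseteq> P K}) / real (card Ks)))"
proof -
  let ?c = "real (card (Pow E))"
  have cpos: "?c > 0" using finE by (simp add: card_gt_0_iff Pow_not_empty)
  have ne: "Pow E \<noteq> {}" by blast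
  have fP: "finite (Pow E)" using finE by simp
  have inner: "measure_pmf.expectation (pmf_of_set (Pow E)) (\<lambda>G. f (G \<union> P K))
     = (\<Sum>S\<in>F. a S * (if S \<subseteq> P K then 1 else 0))" for K
  proof -
    have "measure_pmf.expectation (pmf_of_set (Pow E)) (\<lambda>G. f (G \<union> P K))
        = (\<Sum>G\<in>Pow E. f (G \<union> P K)) / ?c"
      by (simp add: integral_pmf_of_set[OF ne fP])
    also have "(\<Sum>G\<in>Pow E. f (G \<union> P K)) = (\<Sum>G\<in>Pow E. \<Sum>S\<in>F. a S * chi S (G \<union> P K))"
      using rep PE[of K] by (intro sum.cong refl) auto
    also have "\<dots> = (\<Sum>S\<in>F. a S * (\<Sum>G\<in>Pow E. chi S (G \<union> P K)))"
      by (subst sum.swap) (simp add: sum_distrib_left)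
    also have "\<dots> = (\<Sum>S\<in>F. a S * (if S \<subseteq> P K then 1 else 0) * ?c)"
      using FE by (intro sum.cong refl) (auto simp: sum_chi_union[OF finE PowD[OF subsetD[OF FE]]])
    finally show ?thesis using cpos by (simp add: sum_distrib_right[symmetric])
  qed
  have fin2: "finite (set_pmf (map_pmf (\<lambda>G. G \<union> P K) (pmf_of_set (Pow E))))" for K
    using fP ne by simp
  have "measure_pmf.expectation
           (bind_pmf (pmf_of_set Ks) (\<lambda>K. map_pmf (\<lambda>G. G \<union> P K) (pmf_of_set (Pow E)))) f
      = (\<Sum>K\<in>Ks. (\<Sum>S\<in>F. a S * (if S \<subseteq> P K then 1 else 0)) / real (card Ks))"
    by (subst pmf_expectation_bind_pmf_of_set[OF neK finK fin2]) (simp add: inner divide_inverse mult.commute)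
  also have "\<dots> = (\<Sum>S\<in>F. a S * ((\<Sum>K\<in>Ks. if S \<subseteq> P K then 1 else 0) / real (card Ks)))"
    by (simp add: sum_divide_distrib sum_distrib_left sum.swap[of _ Ks] mult.assoc)
  also have "\<dots> = (\<Sum>S\<in>F. a S * (real (card {K\<in>Ks. S \<subseteq> P K}) / real (card Ks)))"
    by (intro sum.cong refl) (simp add: sum.If_cases[OF finK] Int_def conj_commute)
  finally show ?thesis .
qed



lemma binom_ratio:
  fixes N k v :: nat
  assumes "v \<le> k" "k \<le> N"
  shows "real ((N - v) choose (k - v)) * real N ^ v \<le> real (N choose k) * real k ^ v"
  using assms
proof (induction v)
  case 0
  then show ?case by simp
next
  case (Suc v)
  let ?a = "real ((N - Suc v) choose (k - Suc v))"
  let ?b = "real ((N - v) choose (k - v))"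
  let ?c = "real (N choose k)"
  have IH: "?b * real N ^ v \<le> ?c * real k ^ v" using Suc by simp
  have abs: "(k - v) * ((N - v) choose (k - v)) = (N - v) * ((N - v - 1) choose (k - v - 1))"
    using binomial_absorption[of "k - v - 1" "N - v"] Suc.prems by (simp add: Suc_diff_Suc)
  have absr: "real (k - v) * ?b = real (N - v) * ?a"
    using arg_cong[OF abs, of real] by (simp add: diff_diff_add)
  have pos: "real (N - v) > 0" using Suc.prems by simp
  have b0: "?b \<ge> 0" "?c \<ge> 0" by simp_all
  have kv: "real (k - v) * real N \<le> real (N - v) * real k"
    using Suc.prems by (simp add: of_nat_diff algebra_simps mult_right_mono)
  have "real (N - v) * (?a * real N ^ Suc v) = (real (k - v) * ?b) * real N ^ v * real N"
    by (simp add: absr[symmetric] mult_ac)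
  also have "\<dots> = real (k - v) * (?b * real N ^ v) * real N" by (simp add: mult_ac)
  also have "\<dots> \<le> real (k - v) * (?c * real k ^ v) * real N"
    by (intro mult_right_mono mult_left_mono IH) simp_all
  also have "\<dots> = (real (k - v) * real N) * (?c * real k ^ v)" by (simp add: mult_ac)
  also have "\<dots> \<le> (real (N - v) * real k) * (?c * real k ^ v)"
    by (rule mult_right_mono[OF kv]) simp
  also have "\<dots> = real (N - v) * (?c * real k ^ Suc v)" by (simp add: mult_ac)
  finally have "real (N - v) * (?a * real N ^ Suc v) \<le> real (N - v) * (?c * real k ^ Suc v)" .
  then show ?case using pos by (simp add: mult_le_cancel_left_pos)
qed

lemma card_contain:
  assumes V: "V \<subseteq> {1..N}" "card V = v" "v \<le> k"
  shows "card {K \<in> {K. K \<subseteq> {1..N} \<and> card K = k}. V \<subseteq> K} = (N - v) choose (k - v)"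
proof -
  have fV: "finite V" using V finite_subset by blast
  have "bij_betw (\<lambda>K. K - V) {K \<in> {K. K \<subseteq> {1..N} \<and> card K = k}. V \<subseteq> K}
          {K'. K' \<subseteq> {1..N} - V \<and> card K' = k - v}"
  proof (rule bij_betw_byWitness[where f'="\<lambda>K'. K' \<union> V"])
    show "\<forall>a\<in>{K \<in> {K. K \<subseteq> {1..N} \<and> card K = k}. V \<subseteq> K}. a - V \<union> V = a" by auto
    show "\<forall>a'\<in>{K'. K' \<subseteq> {1..N} - V \<and> card K' = k - v}. a' \<union> V - V = a'" by auto
    show "(\<lambda>K. K - V) ` {K \<in> {K. K \<subseteq> {1..N} \<and> card K = k}. V \<subseteq> K}
          \<subseteq> {K'. K' \<subseteq> {1..N} - V \<and> card K' = k - v}"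
    proof
      fix K' assume "K' \<in> (\<lambda>K. K - V) ` {K \<in> {K. K \<subseteq> {1..N} \<and> card K = k}. V \<subseteq> K}"
      then obtain K where K: "K \<subseteq> {1..N}" "card K = k" "V \<subseteq> K" "K' = K - V" by auto
      have "finite K" using K(1) finite_subset by blast
      then have "card (K - V) = k - v" using K V by (simp add: card_Diff_subset fV)
      then show "K' \<in> {K'. K' \<subseteq> {1..N} - V \<and> card K' = k - v}" using K by auto
    qed
    show "(\<lambda>K'. K' \<union> V) ` {K'. K' \<subseteq> {1..N} - V \<and> card K' = k - v}
          \<subseteq> {K \<in> {K. K \<subseteq> {1..N} \<and> card K = k}. V \<subseteq> K}"
    proof
      fix K assume "K \<in> (\<lambda>K'. K' \<union> V) ` {K'. K' \<subseteq> {1..N} - V \<and> card K' = k - v}"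
      then obtain K' where K': "K' \<subseteq> {1..N} - V" "card K' = k - v" "K = K' \<union> V" by auto
      then have fK: "finite K'" using finite_subset by blast
      have "card (K' \<union> V) = card K' + card V"
        by (rule card_Un_disjoint) (use fK fV K' in auto)
      then have "card K = k" using V K' by simp
      then show "K \<in> {K \<in> {K. K \<subseteq> {1..N} \<and> card K = k}. V \<subseteq> K}" using K' V by auto
    qed
  qed
  then have "card {K \<in> {K. K \<subseteq> {1..N} \<and> card K = k}. V \<subseteq> K}
      = card {K'. K' \<subseteq> {1..N} - V \<and> card K' = k - v}" by (rule bij_betw_same_card)
  also have "\<dots> = card ({1..N} - V) choose (k - v)" by (rule n_subsets) simp
  also have "card ({1..N} - V) = N - v" using V fV by (simp add: card_Diff_subset)
  finally show ?thesis .
qed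

lemma prob_contain:
  assumes V: "V \<subseteq> {1..N}" "card V = v" and kN: "k \<le> N" and N: "N \<ge> 1"
  shows "real (card {K \<in> {K. K \<subseteq> {1..N} \<and> card K = k}. V \<subseteq> K})
          / real (card {K. K \<subseteq> {1..N} \<and> card K = k}) \<le> (real k / real N) ^ v"
proof -
  have cK: "card {K. K \<subseteq> {1..N} \<and> card K = k} = N choose k"
    using n_subsets[of "{1..N}" k] by simp
  have cpos: "real (N choose k) > 0" using kN by simp
  have Npos: "real N ^ v > 0" using N by simp
  show ?thesis
  proof (cases "v \<le> k")
    case True
    have "real ((N - v) choose (k - v)) * real N ^ v \<le> real (N choose k) * real k ^ v"
      by (rule binom_ratio[OF True kN])
    then have "real ((N - v) choose (k - v)) / real (N choose k) \<le> real k ^ v / real N ^ v"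
      using cpos Npos by (simp add: field_simps)
    then show ?thesis using card_contain[OF V True] cK by (simp add: power_divide)
  next
    case False
    have em: "{K \<in> {K. K \<subseteq> {1..N} \<and> card K = k}. V \<subseteq> K} = {}"
    proof -
      { fix K assume K: "K \<subseteq> {1..N}" "V \<subseteq> K" "card K = k"
        then have "card V \<le> card K" by (meson card_mono finite_atLeastAtMost finite_subset)
        then have False using False V K by simp }
      then show ?thesis by blast
    qed
    have c0: "real (card {K \<in> {K. K \<subseteq> {1..N} \<and> card K = k}. V \<subseteq> K}) = 0"
      by (simp only: em card.empty of_nat_0)
    show ?thesis by (simp only: c0) simp
  qed
qed

lemma card_le_D:
  assumes "finite A"
  shows "card {S. S \<subseteq> A \<and> card S \<le> D} \<le> (card A + 1) ^ D"
proof -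
  have eq: "{S. S \<subseteq> A \<and> card S \<le> D} = (\<Union>k\<in>{..D}. {S. S \<subseteq> A \<and> card S = k})" by auto
  have "card {S. S \<subseteq> A \<and> card S \<le> D} \<le> (\<Sum>k\<in>{..D}. card {S. S \<subseteq> A \<and> card S = k})"
    unfolding eq by (rule card_UN_le) simp
  also have "\<dots> = (\<Sum>k\<in>{..D}. card A choose k)" by (simp add: n_subsets[OF assms])
  also have "\<dots> \<le> (\<Sum>k\<in>{..D}. (D choose k) * card A ^ k * 1 ^ (D - k))"
  proof (rule sum_mono)
    fix k assume k: "k \<in> {..D}"
    have "card A choose k \<le> card A ^ k"
      by (cases "k \<le> card A") (simp_all add: binomial_le_pow binomial_eq_0)
    also have "\<dots> \<le> (D choose k) * card A ^ k"
      using k zero_less_binomial[of k D] by (auto simp: Suc_le_eq)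
    finally show "card A choose k \<le> (D choose k) * card A ^ k * 1 ^ (D - k)" by simp
  qed
  also have "\<dots> = (card A + 1) ^ D" using binomial_ring[of "card A" 1 D] by simp
  finally show ?thesis .
qed

lemma card_dsub:
  assumes "finite V"
  shows "card {e. e \<subseteq> V \<and> card e = d} \<le> card V ^ d"
proof -
  have "card {e. e \<subseteq> V \<and> card e = d} = card V choose d" by (rule n_subsets[OF assms])
  also have "\<dots> \<le> card V ^ d" by (cases "d \<le> card V") (simp_all add: binomial_le_pow binomial_eq_0)
  finally show ?thesis .
qed

lemma count_groups:
  assumes b: "\<And>V. V \<subseteq> {1..N} \<Longrightarrow> card V = v \<Longrightarrow>
               card {S. S \<subseteq> {e. e \<subseteq> V \<and> card e = d} \<and> card S \<le> D} \<le> b"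
  shows "card {S \<in> {S. S \<subseteq> hyperedges N d \<and> card S \<le> D}. card (\<Union>S) = v} \<le> (N choose v) * b"
proof -
  let ?Vs = "{V. V \<subseteq> {1..N} \<and> card V = v}"
  let ?A = "\<lambda>V. {S. S \<subseteq> {e. e \<subseteq> V \<and> card e = d} \<and> card S \<le> D}"
  have sub: "{S \<in> {S. S \<subseteq> hyperedges N d \<and> card S \<le> D}. card (\<Union>S) = v} \<subseteq> (\<Union>V\<in>?Vs. ?A V)"
  proof
    fix S assume "S \<in> {S \<in> {S. S \<subseteq> hyperedges N d \<and> card S \<le> D}. card (\<Union>S) = v}"
    then have S: "S \<subseteq> hyperedges N d" "card S \<le> D" "card (\<Union>S) = v" by auto
    have "\<Union>S \<subseteq> {1..N}" using S(1) by (auto simp: hyperedges_def)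
    moreover have "S \<subseteq> {e. e \<subseteq> \<Union>S \<and> card e = d}" using S(1) by (auto simp: hyperedges_def)
    ultimately show "S \<in> (\<Union>V\<in>?Vs. ?A V)" using S by (intro UN_I[of "\<Union>S"]) auto
  qed
  have finU: "finite (\<Union>V\<in>?Vs. ?A V)"
  proof (rule finite_UN_I)
    show "finite ?Vs" by (rule finite_subset[of _ "Pow {1..N}"]) auto
    fix V assume "V \<in> ?Vs"
    then have "finite V" using finite_subset by blast
    then have "finite {e. e \<subseteq> V \<and> card e = d}" by (auto intro: finite_subset[of _ "Pow V"])
    then show "finite (?A V)" by (auto intro: finite_subset[of _ "Pow {e. e \<subseteq> V \<and> card e = d}"])
  qed
  have "card {S \<in> {S. S \<subseteq> hyperedges N d \<and> card S \<le> D}. card (\<Union>S) = v} \<le> card (\<Union>V\<in>?Vs. ?A V)"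
    by (rule card_mono[OF finU sub])
  also have "\<dots> \<le> (\<Sum>V\<in>?Vs. card (?A V))"
    by (rule card_UN_le) (rule finite_subset[of _ "Pow {1..N}"], auto)
  also have "\<dots> \<le> (\<Sum>V\<in>?Vs. b)" by (rule sum_mono) (use b in auto)
  also have "\<dots> = (N choose v) * b" using n_subsets[of "{1..N}" v] by simp
  finally show ?thesis .
qed



lemma ev_real: fixes C \<epsilon> :: real and d :: nat assumes "C > 0" "\<epsilon> > 0"
  shows "eventually (\<lambda>x. C * (ln 2 + real d * ln x) \<le> \<epsilon> * x / 2) at_top"
proof -
  have "((\<lambda>x::real. C * ln 2 / x + C * real d * (ln x / x)) \<longlongrightarrow> 0) at_top"
    by real_asymp
  then have "eventually (\<lambda>x. C * ln 2 / x + C * real d * (ln x / x) < \<epsilon> / 2) at_top"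
    using assms by (intro order_tendstoD) auto
  moreover have "eventually (\<lambda>x::real. x > 0) at_top" by (rule eventually_gt_at_top)
  ultimately show ?thesis
  proof eventually_elim
    case (elim x)
    then have "(C * ln 2 / x + C * real d * (ln x / x)) * x \<le> \<epsilon> / 2 * x"
      by (intro mult_right_mono) auto
    then show ?case using elim by (simp add: field_simps)
  qed
qed



lemma exists_v0: fixes C \<epsilon> :: real and d :: nat assumes "C > 0" "\<epsilon> > 0"
  shows "\<exists>v0::nat. v0 \<ge> 1 \<and> (\<forall>v\<ge>v0. C * ln (real v ^ d + 1) \<le> \<epsilon> * real v / 2)"
proof -
  have "eventually (\<lambda>v::nat. C * (ln 2 + real d * ln (real v)) \<le> \<epsilon> * real v / 2) sequentially"
    using ev_real[OF assms, of d] filterlim_real_sequentially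
    by (rule filterlim_iff[THEN iffD1, rule_format, rotated]) 
  then obtain v1 where v1: "\<And>v. v \<ge> v1 \<Longrightarrow> C * (ln 2 + real d * ln (real v)) \<le> \<epsilon> * real v / 2"
    by (auto simp: eventually_sequentially)
  show ?thesis
  proof (intro exI[of _ "max 1 v1"] conjI allI impI)
    fix v :: nat assume v: "max 1 v1 \<le> v"
    then have v1': "real v \<ge> 1" by simp
    have p: "real v ^ d \<ge> 1" using v1' by (simp add: one_le_power)
    have "ln (real v ^ d + 1) \<le> ln (2 * real v ^ d)"
      using p v1' by (subst ln_le_cancel_iff) (auto simp: add_pos_nonneg)
    also have "\<dots> = ln 2 + real d * ln (real v)"
      using v1' by (simp add: ln_mult ln_realpow)
    finally have "C * ln (real v ^ d + 1) \<le> C * (ln 2 + real d * ln (real v))"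
      using assms by (intro mult_left_mono) auto
    also have "\<dots> \<le> \<epsilon> * real v / 2" using v1 v by simp
    finally show "C * ln (real v ^ d + 1) \<le> \<epsilon> * real v / 2" .
  qed simp
qed

lemma sum_bound:
  fixes C \<epsilon> :: real and d D N v0 :: nat and bnd :: "nat \<Rightarrow> real"
  assumes C: "C > 0" and eps: "\<epsilon> > 0" and v0: "\<forall>v\<ge>v0. C * ln (real v ^ d + 1) \<le> \<epsilon> * real v / 2"
    and N: "N \<ge> 2" and D: "real D \<le> C * ln (real N)"
    and b1: "\<And>v. bnd v \<le> 2 ^ (v ^ d)" and b2: "\<And>v. bnd v \<le> (real v ^ d + 1) ^ D"
    and b0: "\<And>v. bnd v \<ge> 0"
  shows "(\<Sum>v\<le>N. exp (- \<epsilon> * ln (real N)) ^ v * bnd v)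
          \<le> real v0 * 2 ^ (v0 ^ d) + 1 / (1 - exp (- \<epsilon> * ln 2 / 2))"
proof -
  define r where "r = exp (- \<epsilon> * ln 2 / 2)"
  have r0: "0 < r" "r < 1" using eps by (auto simp: r_def)
  have lnN: "ln (real N) \<ge> ln 2" using N by simp
  have lnN0: "ln (real N) > 0" using N by simp
  have trm: "exp (- \<epsilon> * ln (real N)) ^ v * bnd v \<le> (if v < v0 then 2 ^ (v0 ^ d) else 0) + r ^ v" for v
  proof (cases "v < v0")
    case True
    have "exp (- \<epsilon> * ln (real N)) ^ v \<le> 1"
      using eps lnN0 by (intro power_le_one) (auto simp: mult_nonneg_nonneg)
    then have "exp (- \<epsilon> * ln (real N)) ^ v * bnd v \<le> 1 * bnd v"
      using b0 by (intro mult_right_mono) auto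
    also have "\<dots> \<le> 2 ^ (v ^ d)" using b1 by simp
    also have "(2::real) ^ (v ^ d) \<le> 2 ^ (v0 ^ d)"
      using True by (intro power_increasing power_mono) auto
    finally have "exp (- \<epsilon> * ln (real N)) ^ v * bnd v \<le> 2 ^ (v0 ^ d)" .
    moreover have "r ^ v \<ge> 0" using r0 by simp
    ultimately show ?thesis using True by simp
  next
    case False
    have vd: "real v ^ d + 1 > 0" using zero_le_power[of "real v" d] by linarith
    have "(real v ^ d + 1) ^ D = exp (real D * ln (real v ^ d + 1))"
      using vd by (metis exp_of_nat_mult exp_ln)
    also have "\<dots> \<le> exp (C * ln (real N) * ln (real v ^ d + 1))"
      using D vd by (intro exp_mono mult_right_mono) (auto simp: ln_ge_zero)
    also have "C * ln (real N) * ln (real v ^ d + 1) = ln (real N) * (C * ln (real v ^ d + 1))" by simp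
    also have "\<dots> \<le> ln (real N) * (\<epsilon> * real v / 2)"
      using v0 False lnN0 by (intro mult_left_mono) auto
    finally have bv: "bnd v \<le> exp (ln (real N) * (\<epsilon> * real v / 2))" using b2 order.trans by blast
    have "exp (- \<epsilon> * ln (real N)) ^ v * bnd v \<le> exp (- \<epsilon> * ln (real N)) ^ v * exp (ln (real N) * (\<epsilon> * real v / 2))"
      using bv by (intro mult_left_mono) auto
    also have "\<dots> = exp (- (\<epsilon> * real v / 2) * ln (real N))"
      by (simp add: exp_of_nat_mult[symmetric] exp_add[symmetric] algebra_simps)
    also have "\<dots> \<le> exp (- (\<epsilon> * real v / 2) * ln 2)"
    proof -
      have "(\<epsilon> * real v / 2) * ln 2 \<le> (\<epsilon> * real v / 2) * ln (real N)"
        using eps lnN by (intro mult_left_mono) auto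
      then show ?thesis by simp
    qed
    also have "\<dots> = r ^ v" by (simp add: r_def exp_of_nat_mult[symmetric] algebra_simps)
    finally show ?thesis using False by simp
  qed
  have "(\<Sum>v\<le>N. exp (- \<epsilon> * ln (real N)) ^ v * bnd v)
        \<le> (\<Sum>v\<le>N. (if v < v0 then 2 ^ (v0 ^ d) else 0) + r ^ v)"
    by (rule sum_mono) (rule trm)
  also have "\<dots> = (\<Sum>v\<le>N. (if v < v0 then 2 ^ (v0 ^ d) else 0)) + (\<Sum>v\<le>N. r ^ v)"
    by (rule sum.distrib)
  also have "(\<Sum>v\<le>N. (if v < v0 then (2::real) ^ (v0 ^ d) else 0)) \<le> real v0 * 2 ^ (v0 ^ d)"
  proof -
    have "(\<Sum>v\<le>N. (if v < v0 then (2::real) ^ (v0 ^ d) else 0)) = (\<Sum>v\<in>{v. v \<le> N \<and> v < v0}. 2 ^ (v0 ^ d))"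
      by (simp add: sum.If_cases Int_def conj_commute atMost_def)
    also have "\<dots> = real (card {v. v \<le> N \<and> v < v0}) * 2 ^ (v0 ^ d)" by simp
    also have "card {v. v \<le> N \<and> v < v0} \<le> v0"
      using card_mono[of "{..<v0}" "{v. v \<le> N \<and> v < v0}"] by auto
    then have "real (card {v. v \<le> N \<and> v < v0}) * (2::real) ^ (v0 ^ d) \<le> real v0 * 2 ^ (v0 ^ d)"
      by (intro mult_right_mono) auto
    finally show ?thesis .
  qed
  also have "(\<Sum>v\<le>N. r ^ v) \<le> 1 / (1 - r)"
  proof -
    have "summable (\<lambda>v. r ^ v)" using r0 by (intro summable_geometric) auto
    then have "(\<Sum>v\<le>N. r ^ v) \<le> (\<Sum>v. r ^ v)"
      using r0 by (intro sum_le_suminf) auto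
    also have "\<dots> = 1 / (1 - r)" using r0 by (intro suminf_geometric) auto
    finally show ?thesis .
  qed
  finally show ?thesis by (simp add: r_def)
qed



lemma kappa_le: "real (nat \<lfloor>real N powr \<beta>\<rfloor>) \<le> real N powr \<beta>"
proof -
  have "0 \<le> real N powr \<beta>" by simp
  then show ?thesis by linarith
qed

lemma kappa_leN: assumes "\<beta> < 1/2" shows "nat \<lfloor>real N powr \<beta>\<rfloor> \<le> N"
proof (cases "N = 0")
  case True then show ?thesis by simp
next
  case False
  then have "real N powr \<beta> \<le> real N powr 1"
    using assms by (intro powr_mono) auto
  moreover have "real N powr 1 = real N" using False by simp
  ultimately have "real (nat \<lfloor>real N powr \<beta>\<rfloor>) \<le> real N" using kappa_le[of N \<beta>] by linarith
  then show ?thesis using of_nat_le_iff by blast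
qed

lemma q_bound:
  assumes N: "N \<ge> 1" and kb: "real k \<le> real N powr \<beta>"
  shows "real k ^ 2 / real N \<le> exp (- (1 - 2 * \<beta>) * ln (real N))"
proof -
  have Np: "real N > 0" using N by simp
  have "real k ^ 2 \<le> (real N powr \<beta>) ^ 2" using kb by (intro power_mono) auto
  also have "\<dots> = exp (2 * \<beta> * ln (real N))"
    using Np by (simp add: powr_def power2_eq_square exp_add[symmetric])
  finally have "real k ^ 2 / real N \<le> exp (2 * \<beta> * ln (real N)) / exp (ln (real N))"
    using Np by (simp add: divide_right_mono)
  also have "\<dots> = exp (- (1 - 2 * \<beta>) * ln (real N))"
    by (simp add: exp_diff[symmetric] algebra_simps)
  finally show ?thesis .
qed

theorem mainTheorem12:
  fixes d :: nat and \<beta> C :: real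
  assumes "d \<ge> 1" and "0 < \<beta>" and "\<beta> < 1/2" and "C > 0"
  shows "\<exists>B::real. \<forall>(N::nat) (D::nat) (f :: nat set set \<Rightarrow> real).
           real D \<le> C * ln (real N) \<longrightarrow>
           is_poly_deg_le N d D f \<longrightarrow>
           measure_pmf.expectation (null_hg N d) f = 0 \<longrightarrow>
           measure_pmf.expectation (null_hg N d) (\<lambda>G. (f G)^2) = 1 \<longrightarrow>
           \<bar>measure_pmf.expectation (planted_hg N d (nat \<lfloor>real N powr \<beta>\<rfloor>)) f\<bar> \<le> B"
proof -
  define \<epsilon> where "\<epsilon> = 1 - 2 * \<beta>"
  have eps: "\<epsilon> > 0" using assms by (simp add: \<epsilon>_def)
  obtain v0 :: nat where v0: "\<forall>v\<ge>v0. C * ln (real v ^ d + 1) \<le> \<epsilon> * real v / 2"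
    using exists_v0[OF \<open>C > 0\<close> eps, of d] by blast
  define B0 where "B0 = real v0 * 2 ^ (v0 ^ d) + 1 / (1 - exp (- \<epsilon> * ln 2 / 2))"
  show ?thesis
  proof (intro exI[of _ "B0 + 1"] allI impI)
    fix N D :: nat and f :: "nat set set \<Rightarrow> real"
    assume hD: "real D \<le> C * ln (real N)" and hp: "is_poly_deg_le N d D f"
      and h0: "measure_pmf.expectation (null_hg N d) f = 0"
      and h1: "measure_pmf.expectation (null_hg N d) (\<lambda>G. (f G)^2) = 1"
    define E where "E = hyperedges N d"
    define F where "F = {S. S \<subseteq> E \<and> card S \<le> D}"
    define k where "k = nat \<lfloor>real N powr \<beta>\<rfloor>"
    define Ks where "Ks = {K. K \<subseteq> {1..N} \<and> card K = k}"
    define P where "P K = {e \<in> E. e \<subseteq> K}" for K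
    define x where "x S = real (card {K\<in>Ks. S \<subseteq> P K}) / real (card Ks)" for S
    obtain a where rep: "\<forall>G. G \<subseteq> E \<longrightarrow> f G = (\<Sum>S\<in>F. a S * chi S G)"
      using poly_rep[OF hp] unfolding F_def E_def by blast
    have finE: "finite E" unfolding E_def by (rule finite_hyperedges)
    have FE: "F \<subseteq> Pow E" by (auto simp: F_def)
    have finF: "finite F" using finE FE finite_subset by blast
    have eF: "{} \<in> F" by (simp add: F_def)
    have a0: "a {} = 0" using null_exp(1)[OF finE FE finF eF rep] h0 by (simp add: null_hg_def E_def)
    have asq: "(\<Sum>S\<in>F. (a S)^2) = 1" using null_exp(2)[OF finE FE finF eF rep] h1 by (simp add: null_hg_def E_def)
    have kN: "k \<le> N" unfolding k_def by (rule kappa_leN[OF \<open>\<beta> < 1/2\<close>])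
    have finK: "finite Ks" unfolding Ks_def by (rule finite_subset[of _ "Pow {1..N}"]) auto
    have cK: "card Ks = N choose k" unfolding Ks_def using n_subsets[of "{1..N}" k] by simp
    have neK: "Ks \<noteq> {}" using cK kN by auto
    have PE: "P K \<subseteq> E" for K by (auto simp: P_def)
    have pl: "planted_hg N d k = bind_pmf (pmf_of_set Ks) (\<lambda>K. map_pmf (\<lambda>G. G \<union> P K) (pmf_of_set (Pow E)))"
      by (simp add: planted_hg_def null_hg_def Ks_def P_def E_def)
    have E1: "measure_pmf.expectation (planted_hg N d k) f = (\<Sum>S\<in>F. a S * x S)"
      unfolding pl x_def by (rule planted_exp[OF finE FE finF rep finK neK PE])
    show "\<bar>measure_pmf.expectation (planted_hg N d (nat \<lfloor>real N powr \<beta>\<rfloor>)) f\<bar> \<le> B0 + 1"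
    proof (cases "D = 0")
      case True
      have "F = {{}}"
      proof -
        { fix S assume "S \<in> F"
          then have "S \<subseteq> E" "card S = 0" using True by (auto simp: F_def)
          then have "S = {}" using finE finite_subset by (metis card_0_eq) }
        then show ?thesis using eF by blast
      qed
      then have "measure_pmf.expectation (planted_hg N d k) f = 0" using E1 a0 by simp
      moreover have "B0 \<ge> 0"
      proof -
        have "exp (- \<epsilon> * ln 2 / 2) < 1" using eps by simp
        then show ?thesis unfolding B0_def by (intro add_nonneg_nonneg) auto
      qed
      ultimately show ?thesis by (simp add: k_def)
    next
      case False
      then have "1 \<le> C * ln (real N)" using hD by linarith
      then have "ln (real N) > 0"
      proof (rule contrapos_pp)
        assume "\<not> ln (real N) > 0"
        then have "C * ln (real N) \<le> 0" using \<open>C > 0\<close> by (intro mult_nonneg_nonpos) auto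
        then show "\<not> 1 \<le> C * ln (real N)" by linarith
      qed
      then have N2: "N \<ge> 2"
      proof (rule contrapos_pp)
        assume "\<not> N \<ge> 2"
        then have "N = 0 \<or> N = 1" by auto
        then show "\<not> ln (real N) > 0" by auto
      qed
      have N1: "N \<ge> 1" using N2 by simp
      have xb: "0 \<le> x S \<and> x S \<le> (real k / real N) ^ card (\<Union>S)" if S: "S \<in> F" for S
      proof -
        have SE: "S \<subseteq> E" using S by (simp add: F_def)
        have eq: "{K\<in>Ks. S \<subseteq> P K} = {K \<in> {K. K \<subseteq> {1..N} \<and> card K = k}. \<Union>S \<subseteq> K}"
          using SE by (auto simp: P_def Ks_def)
        have VN: "\<Union>S \<subseteq> {1..N}" using SE by (auto simp: E_def hyperedges_def)
        show ?thesis unfolding x_def eq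
          using prob_contain[OF VN refl kN N1] by (simp add: Ks_def)
      qed
      define bnd where "bnd v = real (min (2 ^ (v ^ d)) ((v ^ d + 1) ^ D))" for v :: nat
      have cnt: "real (card {S \<in> F. card (\<Union>S) = v}) \<le> real (N choose v) * bnd v" for v
      proof -
        have "card {S \<in> F. card (\<Union>S) = v} \<le> (N choose v) * min (2 ^ (v ^ d)) ((v ^ d + 1) ^ D)"
          unfolding F_def E_def
        proof (rule count_groups)
          fix V :: "nat set" assume V: "V \<subseteq> {1..N}" "card V = v"
          have fV: "finite V" using V finite_subset by blast
          have fdV: "finite {e. e \<subseteq> V \<and> card e = d}" using fV by (auto intro: finite_subset[of _ "Pow V"])
          have cd: "card {e. e \<subseteq> V \<and> card e = d} \<le> v ^ d" using card_dsub[OF fV, of d] V by simp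
          have "card {S. S \<subseteq> {e. e \<subseteq> V \<and> card e = d} \<and> card S \<le> D}
                \<le> card (Pow {e. e \<subseteq> V \<and> card e = d})"
            by (rule card_mono) (use fdV in auto)
          also have "\<dots> \<le> 2 ^ (v ^ d)" using cd fdV by (simp add: card_Pow power_increasing)
          finally have c1: "card {S. S \<subseteq> {e. e \<subseteq> V \<and> card e = d} \<and> card S \<le> D} \<le> 2 ^ (v ^ d)" .
          have "card {S. S \<subseteq> {e. e \<subseteq> V \<and> card e = d} \<and> card S \<le> D}
                \<le> (card {e. e \<subseteq> V \<and> card e = d} + 1) ^ D" by (rule card_le_D[OF fdV])
          also have "\<dots> \<le> (v ^ d + 1) ^ D" using cd by (intro power_mono) auto
          finally show "card {S. S \<subseteq> {e. e \<subseteq> V \<and> card e = d} \<and> card S \<le> D}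
                \<le> min (2 ^ (v ^ d)) ((v ^ d + 1) ^ D)" using c1 by simp
        qed
        then show ?thesis unfolding bnd_def by (metis of_nat_le_iff of_nat_mult)
      qed
      have b1: "bnd v \<le> 2 ^ (v ^ d)" for v unfolding bnd_def by (simp add: min_def)
      have b2: "bnd v \<le> (real v ^ d + 1) ^ D" for v
      proof -
        have "bnd v \<le> real ((v ^ d + 1) ^ D)" unfolding bnd_def by (rule of_nat_mono[OF min.cobounded2])
        then show ?thesis by (simp add: add.commute)
      qed
      have b0: "bnd v \<ge> 0" for v unfolding bnd_def by simp
      have qb: "real k ^ 2 / real N \<le> exp (- \<epsilon> * ln (real N))"
        unfolding \<epsilon>_def k_def by (rule q_bound[OF N1 kappa_le])
      have fin_im: "(\<lambda>S. card (\<Union>S)) ` F \<subseteq> {..N}"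
      proof
        fix v assume "v \<in> (\<lambda>S. card (\<Union>S)) ` F"
        then obtain S where S: "S \<in> F" "v = card (\<Union>S)" by auto
        have "\<Union>S \<subseteq> {1..N}" using S by (auto simp: F_def E_def hyperedges_def)
        then have "card (\<Union>S) \<le> card {1..N}" by (intro card_mono) auto
        then show "v \<in> {..N}" using S by simp
      qed
      have "(\<Sum>S\<in>F. (x S)^2) \<le> (\<Sum>S\<in>F. ((real k / real N) ^ card (\<Union>S))^2)"
        using xb by (intro sum_mono power_mono) auto
      also have "\<dots> = (\<Sum>v\<le>N. \<Sum>S\<in>{S\<in>F. card (\<Union>S) = v}. ((real k / real N) ^ card (\<Union>S))^2)"
        by (rule sum.group[OF finF _ fin_im, symmetric]) simp
      also have "\<dots> = (\<Sum>v\<le>N. real (card {S\<in>F. card (\<Union>S) = v}) * ((real k / real N) ^ v)^2)"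
        by (intro sum.cong refl) simp
      also have "\<dots> \<le> (\<Sum>v\<le>N. exp (- \<epsilon> * ln (real N)) ^ v * bnd v)"
      proof (rule sum_mono)
        fix v assume v: "v \<in> {..N}"
        have "real (N choose v) \<le> real N ^ v" using binomial_le_pow[of v N] v
          by (metis atMost_iff of_nat_le_iff of_nat_power)
        have "real (card {S\<in>F. card (\<Union>S) = v}) * ((real k / real N) ^ v)^2
              \<le> (real (N choose v) * bnd v) * ((real k / real N) ^ v)^2"
          using cnt by (intro mult_right_mono) auto
        also have "\<dots> \<le> (real N ^ v * bnd v) * ((real k / real N) ^ v)^2"
          using \<open>real (N choose v) \<le> real N ^ v\<close> b0 by (intro mult_right_mono) auto
        also have "\<dots> = (real k ^ 2 / real N) ^ v * bnd v"
          using N1 by (simp add: power_divide power_mult_distrib field_simps mult_2_right flip: power_mult power_add)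
        also have "\<dots> \<le> exp (- \<epsilon> * ln (real N)) ^ v * bnd v"
          using qb b0 by (intro mult_right_mono power_mono) auto
        finally show "real (card {S\<in>F. card (\<Union>S) = v}) * ((real k / real N) ^ v)^2
              \<le> exp (- \<epsilon> * ln (real N)) ^ v * bnd v" .
      qed
      also have "\<dots> \<le> B0" unfolding B0_def
        by (rule sum_bound[OF \<open>C > 0\<close> eps v0 N2 hD b1 b2 b0])
      finally have xsq: "(\<Sum>S\<in>F. (x S)^2) \<le> B0" .
      have "(measure_pmf.expectation (planted_hg N d k) f)^2 \<le> (\<Sum>S\<in>F. (a S)^2) * (\<Sum>S\<in>F. (x S)^2)"
        unfolding E1 by (rule Cauchy_Schwarz_ineq_sum)
      also have "\<dots> \<le> B0" using asq xsq by simp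
      finally have sq: "(measure_pmf.expectation (planted_hg N d k) f)^2 \<le> B0" .
      have "\<bar>measure_pmf.expectation (planted_hg N d k) f\<bar> \<le> B0 + 1"
      proof (cases "\<bar>measure_pmf.expectation (planted_hg N d k) f\<bar> \<le> 1")
        case True
        have "0 \<le> (measure_pmf.expectation (planted_hg N d k) f)^2" by simp
        then show ?thesis using True sq by linarith
      next
        case False
        then have "\<bar>measure_pmf.expectation (planted_hg N d k) f\<bar> * 1 \<le> \<bar>measure_pmf.expectation (planted_hg N d k) f\<bar> * \<bar>measure_pmf.expectation (planted_hg N d k) f\<bar>"
          by (intro mult_left_mono) auto
        then have "\<bar>measure_pmf.expectation (planted_hg N d k) f\<bar> \<le> (measure_pmf.expectation (planted_hg N d k) f)^2"
          by (simp add: power2_eq_square)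
        then show ?thesis using sq by simp
      qed
      then show ?thesis by (simp add: k_def)
    qed
  qed
qed


end
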